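(* Let $\Sigma$ be a real symmetric positive definite $n\times n$ matrix, let $D_0$ be the diagonal matrix with $[D_0]_{ii}=\dfrac{1}{2[\Sigma^{-1}]_{ii}}$, and let $\lambda_{\min}$ be the smallest eigenvalue of $D_0^{-1/2}\Sigma D_0^{-1/2}$. Let \[\mathcal S(\Sigma)=\{(\hat\Sigma,\tilde\Sigma)\mid \Sigma=\hat\Sigma+\tilde\Sigma,\ \hat\Sigma\ge0,\ \tilde\Sigma\ge 0,\ \tilde\Sigma\text{ diagonal}\},\] $L(K,\hat\Sigma,\tilde\Sigma)=\operatorname{trace}(\hat\Sigma-K\hat\Sigma-\hat\Sigma K'+K(\hat\Sigma+\tilde\Sigma)K')$ for $K\in\mathbb R^{n\times n}$, and for $\lambda\ge 0$ let $(\hat\Sigma_{\lambda,\rm opt},\tilde\Sigma_{\lambda,\rm opt})$ be the (unique) maximizer over $\mathcal S(\Sigma)$ of \[\min_K\big(L(K,\hat\Sigma,\tilde\Sigma)-\lambda\operatorname{trace}(\hat\Sigma)\big)=\operatorname{trace}\big((1-\lambda)\hat\Sigma-\hat\Sigma\Sigma^{-1}\hat\Sigma\big).\] Then for every $\lambda\ge 0$ with $\lambda\ge\lambda_{\min}-1$, the matrix $\hat\Sigma_{\lambda,\rm opt}$ is singular.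
   Context: All matrices $\hat\Sigma,\tilde\Sigma$ are real symmetric $n\times n$; $M\ge0$ means positive semidefinite. This maximizer corresponds to the regularized min-max problem $\min_K\max_{\mathcal S(\Sigma)}(L-\lambda\operatorname{trace}(\hat\Sigma))$, for which min and max can be exchanged. *)

theory Defs
  imports "HOL-Analysis.Analysis"
begin

definition symmetric_mat :: "real^'n^'n \<Rightarrow> bool" where
  "symmetric_mat M \<longleftrightarrow> transpose M = M"

definition psd :: "real^'n^'n \<Rightarrow> bool" where
  "psd M \<longleftrightarrow> symmetric_mat M \<and> (\<forall>x. x \<bullet> (M *v x) \<ge> 0)"

definition pos_def :: "real^'n^'n \<Rightarrow> bool" where
  "pos_def M \<longleftrightarrow> symmetric_mat M \<and> (\<forall>x. x \<noteq> 0 \<longrightarrow> x \<bullet> (M *v x) > 0)"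

definition diagonal_mat :: "real^'n^'n \<Rightarrow> bool" where
  "diagonal_mat M \<longleftrightarrow> (\<forall>i j. i \<noteq> j \<longrightarrow> M $ i $ j = 0)"

definition diag_mat :: "(real^'n) \<Rightarrow> real^'n^'n" where
  "diag_mat d = (\<chi> i j. if i = j then d $ i else 0)"

definition eigenvalues :: "real^'n^'n \<Rightarrow> real set" where
  "eigenvalues M = {\<mu>. \<exists>v. v \<noteq> 0 \<and> M *v v = \<mu> *\<^sub>R v}"

definition D0 :: "real^'n^'n \<Rightarrow> real^'n^'n" where
  "D0 S = diag_mat (\<chi> i. 1 / (2 * matrix_inv S $ i $ i))"

definition D0_inv_sqrt :: "real^'n^'n \<Rightarrow> real^'n^'n" where
  "D0_inv_sqrt S = diag_mat (\<chi> i. sqrt (2 * matrix_inv S $ i $ i))"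

definition lambda_min :: "real^'n^'n \<Rightarrow> real" where
  "lambda_min S = Min (eigenvalues (D0_inv_sqrt S ** S ** D0_inv_sqrt S))"

definition S_set :: "real^'n^'n \<Rightarrow> ((real^'n^'n) \<times> (real^'n^'n)) set" where
  "S_set S = {(Sh, St). S = Sh + St \<and> psd Sh \<and> psd St \<and> diagonal_mat St}"

definition L_fun :: "real^'n^'n \<Rightarrow> real^'n^'n \<Rightarrow> real^'n^'n \<Rightarrow> real" where
  "L_fun K Sh St = trace (Sh - K ** Sh - Sh ** transpose K + K ** (Sh + St) ** transpose K)"

text \<open>The regularised objective min_K (L(K,Sh,St) - lam trace Sh), in the closed
  form given in the paper: trace((1-lam) Sh - Sh Sigma^-1 Sh).\<close>
definition reg_obj :: "real \<Rightarrow> real^'n^'n \<Rightarrow> real^'n^'n \<Rightarrow> real" where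
  "reg_obj lam S Sh = trace ((1 - lam) *\<^sub>R Sh - Sh ** matrix_inv S ** Sh)"

definition is_opt :: "real \<Rightarrow> real^'n^'n \<Rightarrow> real^'n^'n \<Rightarrow> real^'n^'n \<Rightarrow> bool" where
  "is_opt lam S Sh St \<longleftrightarrow> (Sh, St) \<in> S_set S \<and>
     (\<forall>(A, B) \<in> S_set S. reg_obj lam S A \<le> reg_obj lam S Sh)"

end

theory Submission
  imports Defs
begin

lemma transpose_diff: "transpose (A - B :: real^'n^'n) = transpose A - transpose B"
  by (simp add: transpose_def vec_eq_iff)

lemma transpose_add': "transpose (A + B :: real^'n^'n) = transpose A + transpose B"
  by (simp add: transpose_def vec_eq_iff)

lemma symm_inner:
  assumes "symmetric_mat M"
  shows "x \<bullet> (M *v y) = (M *v x) \<bullet> y"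
proof -
  have "x \<bullet> (M *v y) = (x v* M) \<bullet> y" by (simp add: dot_lmul_matrix)
  also have "x v* M = transpose M *v x" by (simp add: transpose_matrix_vector)
  also have "\<dots> = M *v x" using assms by (simp add: symmetric_mat_def)
  finally show ?thesis .
qed

lemma psd_kernel:
  fixes N :: "real^'n^'n"
  assumes sym: "symmetric_mat N" and pos: "\<And>x. 0 \<le> x \<bullet> (N *v x)"
    and z: "x0 \<bullet> (N *v x0) = 0"
  shows "N *v x0 = 0"
proof (rule ccontr)
  assume ne: "N *v x0 \<noteq> 0"
  define y where "y = N *v x0"
  define a where "a = y \<bullet> y"
  define b where "b = y \<bullet> (N *v y)"
  have a: "a > 0" using ne by (simp add: a_def y_def)
  have b: "b \<ge> 0" using pos by (simp add: b_def)
  have "\<And>t. 0 \<le> (x0 - t *\<^sub>R y) \<bullet> (N *v (x0 - t *\<^sub>R y))" by (rule pos)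
  moreover have "\<And>t. (x0 - t *\<^sub>R y) \<bullet> (N *v (x0 - t *\<^sub>R y)) = t^2 * b - 2 * t * a"
  proof -
    fix t
    have yx: "y \<bullet> (N *v x0) = a" by (simp add: a_def y_def)
    have xy: "x0 \<bullet> (N *v y) = a" using symm_inner[OF sym, of x0 y] by (simp add: a_def y_def inner_commute)
    show "(x0 - t *\<^sub>R y) \<bullet> (N *v (x0 - t *\<^sub>R y)) = t^2 * b - 2 * t * a"
      by (simp add: matrix_vector_mult_diff_distrib matrix_vector_mult_scaleR inner_diff_left inner_diff_right
          z yx xy b_def power2_eq_square algebra_simps)
  qed
  ultimately have h: "\<And>t. 0 \<le> t^2 * b - 2 * t * a" by metis
  define t where "t = a / (b + 1)"
  have tp: "t > 0" using a b by (simp add: t_def)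
  have "0 \<le> t * (t * b - 2 * a)" using h[of t] by (simp add: power2_eq_square algebra_simps)
  hence "0 \<le> t * b - 2 * a" using tp by (simp add: zero_le_mult_iff)
  moreover have "t * b < a" using a b by (simp add: t_def field_simps)
  ultimately show False using a by linarith
qed

lemma rayleigh:
  fixes M :: "real^'n^'n"
  assumes sym: "symmetric_mat M"
  shows "\<exists>x0. norm x0 = 1 \<and> (\<forall>x. (x0 \<bullet> (M *v x0)) * (norm x)^2 \<le> x \<bullet> (M *v x))
              \<and> M *v x0 = (x0 \<bullet> (M *v x0)) *\<^sub>R x0"
proof -
  have cont: "continuous_on (sphere 0 1) (\<lambda>x::real^'n. x \<bullet> (M *v x))"
    by (intro continuous_intros matrix_vector_mult_linear_continuous_on)
  have ne: "sphere (0::real^'n) 1 \<noteq> {}" by simp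
  obtain x0 where x0: "x0 \<in> sphere 0 1" and mn: "\<And>y. y \<in> sphere 0 1 \<Longrightarrow> x0 \<bullet> (M *v x0) \<le> y \<bullet> (M *v y)"
    using continuous_attains_inf[OF compact_sphere ne cont] by blast
  define m where "m = x0 \<bullet> (M *v x0)"
  have n1: "norm x0 = 1" using x0 by simp
  have low: "m * (norm x)^2 \<le> x \<bullet> (M *v x)" for x
  proof (cases "x = 0")
    case True then show ?thesis by simp
  next
    case False
    define u where "u = (1 / norm x) *\<^sub>R x"
    have "u \<in> sphere 0 1" using False by (simp add: u_def)
    hence "m \<le> u \<bullet> (M *v u)" using mn m_def by blast
    also have "u \<bullet> (M *v u) = (x \<bullet> (M *v x)) / (norm x)^2"
      by (simp add: u_def matrix_vector_mult_scaleR power2_eq_square)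
    finally show ?thesis using False by (simp add: field_simps)
  qed
  define N where "N = M - m *\<^sub>R mat 1"
  have symN: "symmetric_mat N" using sym
    by (simp add: N_def symmetric_mat_def transpose_diff transpose_scalar transpose_mat)
  have Nv: "N *v x = M *v x - m *\<^sub>R x" for x
    by (simp add: N_def matrix_vector_mult_diff_rdistrib scaleR_matrix_vector_assoc[symmetric])
  have posN: "0 \<le> x \<bullet> (N *v x)" for x
    using low[of x] by (simp add: Nv inner_diff_right dot_square_norm)
  have zN: "x0 \<bullet> (N *v x0) = 0" using n1 by (simp add: Nv inner_diff_right dot_square_norm m_def)
  have "N *v x0 = 0" by (rule psd_kernel[OF symN posN zN])
  hence "M *v x0 = m *\<^sub>R x0" by (simp add: Nv)
  thus ?thesis using n1 low m_def by blast
qed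

lemma eig_finite:
  fixes M :: "real^'n^'n"
  assumes sym: "symmetric_mat M"
  shows "finite (eigenvalues M)"
proof -
  define f where "f \<mu> = (SOME v. v \<noteq> 0 \<and> M *v v = \<mu> *\<^sub>R v)" for \<mu>
  have f: "f \<mu> \<noteq> 0 \<and> M *v f \<mu> = \<mu> *\<^sub>R f \<mu>" if "\<mu> \<in> eigenvalues M" for \<mu>
  proof -
    have "\<exists>v. v \<noteq> 0 \<and> M *v v = \<mu> *\<^sub>R v" using that unfolding eigenvalues_def by blast
    from someI_ex[OF this] show ?thesis unfolding f_def .
  qed
  have inj: "inj_on f (eigenvalues M)"
  proof (rule inj_onI)
    fix a b assume a: "a \<in> eigenvalues M" and b: "b \<in> eigenvalues M" and e: "f a = f b"
    have "a *\<^sub>R f a = b *\<^sub>R f a" using f[OF a] f[OF b] e by metis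
    thus "a = b" using f[OF a] by simp
  qed
  have orth: "pairwise orthogonal (f ` eigenvalues M)"
  proof (unfold pairwise_def, clarify)
    fix a b assume a: "a \<in> eigenvalues M" and b: "b \<in> eigenvalues M" and ne: "f a \<noteq> f b"
    hence ab: "a \<noteq> b" by auto
    have "a * (f a \<bullet> f b) = (M *v f a) \<bullet> f b" using f[OF a] by simp
    also have "\<dots> = f a \<bullet> (M *v f b)" using symm_inner[OF sym] by simp
    also have "\<dots> = b * (f a \<bullet> f b)" using f[OF b] by simp
    finally have "(a - b) * (f a \<bullet> f b) = 0" by (simp add: algebra_simps)
    thus "orthogonal (f a) (f b)" using ab by (simp add: orthogonal_def)
  qed
  have "0 \<notin> f ` eigenvalues M" using f by auto
  hence "independent (f ` eigenvalues M)" using pairwise_orthogonal_independent orth by blast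
  hence "finite (f ` eigenvalues M)" using independent_bound by blast
  thus ?thesis using finite_imageD inj by blast
qed

lemma eig_min:
  fixes M :: "real^'n^'n"
  assumes sym: "symmetric_mat M"
  shows "\<exists>v. v \<noteq> 0 \<and> M *v v = Min (eigenvalues M) *\<^sub>R v"
proof -
  obtain x0 where "norm x0 = 1" "M *v x0 = (x0 \<bullet> (M *v x0)) *\<^sub>R x0"
    using rayleigh[OF sym] by blast
  hence "eigenvalues M \<noteq> {}" unfolding eigenvalues_def by (auto intro!: exI[of _ x0])
  hence "Min (eigenvalues M) \<in> eigenvalues M" using Min_in eig_finite[OF sym] by blast
  thus ?thesis unfolding eigenvalues_def by blast
qed

lemma msub_l: "(A::real^'n^'n) ** (B - C) = A ** B - A ** C"
  by (simp add: matrix_matrix_mult_def vec_eq_iff sum_subtractf right_diff_distrib)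
lemma msub_r: "((A::real^'n^'n) - B) ** C = A ** C - B ** C"
  by (simp add: matrix_matrix_mult_def vec_eq_iff sum_subtractf left_diff_distrib)
lemma msc_l: "((k::real) *\<^sub>R (A::real^'n^'n)) ** B = k *\<^sub>R (A ** B)"
  by (simp add: matrix_matrix_mult_def vec_eq_iff sum_distrib_left mult.assoc)
lemma msc_r: "(A::real^'n^'n) ** ((k::real) *\<^sub>R B) = k *\<^sub>R (A ** B)"
  by (simp add: matrix_matrix_mult_def vec_eq_iff sum_distrib_left algebra_simps)
lemma trace_scale: "trace ((k::real) *\<^sub>R (A::real^'n^'n)) = k * trace A"
  by (simp add: trace_def sum_distrib_left)

lemma reg_expand:
  fixes Sh P E :: "real^'n^'n"
  shows "trace ((1 - lam) *\<^sub>R (Sh - t *\<^sub>R E) - (Sh - t *\<^sub>R E) ** P ** (Sh - t *\<^sub>R E))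
    = trace ((1 - lam) *\<^sub>R Sh - Sh ** P ** Sh) - t * (1 - lam) * trace E
      + t * trace (E ** P ** Sh) + t * trace (Sh ** P ** E) - t^2 * trace (E ** P ** E)"
  by (simp add: msub_l msub_r msc_l msc_r trace_sub trace_add trace_scale scaleR_diff_right
      power2_eq_square algebra_simps)

definition Emat :: "'n \<Rightarrow> real^'n^'n" where
  "Emat i = (\<chi> j k. if j = i \<and> k = i then 1 else 0)"

lemma Emat_mult_l: "(Emat i ** X) $ j $ k = (if j = i then X $ i $ k else 0)"
  by (auto simp add: Emat_def matrix_matrix_mult_def if_distrib[of "\<lambda>a. a * _"] cong: if_cong)
lemma Emat_vec: "Emat i *v x = (\<chi> j. if j = i then x $ i else 0)"
  by (auto simp add: Emat_def matrix_vector_mult_def vec_eq_iff if_distrib[of "\<lambda>a. a * _"] cong: if_cong)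
lemma Emat_quad: "x \<bullet> (Emat i *v x) = (x $ i)^2"
  by (simp add: Emat_vec inner_vec_def power2_eq_square if_distrib[of "\<lambda>a. _ * a"] cong: if_cong)
lemma trace_Emat_l: "trace (Emat i ** X) = X $ i $ i"
  by (simp add: trace_def Emat_mult_l)
lemma trace_Emat: "trace (Emat i) = 1"
  by (simp add: trace_def Emat_def)
lemma trace_Emat_r: "trace (X ** Emat i) = X $ i $ i"
  by (subst trace_mul_sym) (rule trace_Emat_l)

lemma Emat_sym: "symmetric_mat (Emat i)"
  unfolding symmetric_mat_def transpose_def Emat_def by (simp add: vec_eq_iff conj_commute)

lemma diag_sum:
  assumes "diagonal_mat D"
  shows "(\<Sum>k\<in>UNIV. D $ i $ k * x $ k) = D $ i $ i * x $ i"
        "(\<Sum>k\<in>UNIV. P $ i $ k * D $ k $ i) = P $ i $ i * D $ i $ i"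
proof -
  have z: "D $ i $ k = 0" "D $ k $ i = 0" if "k \<noteq> i" for k
    using assms that unfolding diagonal_mat_def by metis+
  have "(\<Sum>k\<in>UNIV. D $ i $ k * x $ k) = (\<Sum>k\<in>UNIV. if k = i then D $ i $ i * x $ i else 0)"
    by (rule sum.cong) (auto simp add: z)
  thus "(\<Sum>k\<in>UNIV. D $ i $ k * x $ k) = D $ i $ i * x $ i" by simp
  have "(\<Sum>k\<in>UNIV. P $ i $ k * D $ k $ i) = (\<Sum>k\<in>UNIV. if k = i then P $ i $ i * D $ i $ i else 0)"
    by (rule sum.cong) (auto simp add: z)
  thus "(\<Sum>k\<in>UNIV. P $ i $ k * D $ k $ i) = P $ i $ i * D $ i $ i" by simp
qed

lemma diag_vec:
  assumes "diagonal_mat D"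
  shows "D *v x = (\<chi> i. D $ i $ i * x $ i)"
  using diag_sum(1)[OF assms] by (simp add: matrix_vector_mult_def vec_eq_iff)

lemma diag_mult_r:
  assumes "diagonal_mat D"
  shows "(P ** D) $ i $ i = P $ i $ i * D $ i $ i"
  using diag_sum(2)[OF assms] by (simp add: matrix_matrix_mult_def)

lemma diag_mult_l:
  assumes "diagonal_mat D"
  shows "(D ** P) $ i $ i = D $ i $ i * P $ i $ i"
  using diag_sum(1)[OF assms, where x="\<chi> k. P $ k $ i"] by (simp add: matrix_matrix_mult_def)

lemma diag_quad:
  assumes "diagonal_mat D"
  shows "x \<bullet> (D *v x) = (\<Sum>i\<in>UNIV. D $ i $ i * (x $ i)^2)"
  using assms unfolding diag_vec[OF assms] inner_vec_def by (intro sum.cong) (simp_all add: power2_eq_square)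

lemma pd_invertible:
  fixes S :: "real^'n^'n"
  assumes "pos_def S"
  shows "invertible S"
proof -
  have "\<forall>x. S *v x = 0 \<longrightarrow> x = 0"
  proof (intro allI impI)
    fix x assume "S *v x = 0"
    hence "x \<bullet> (S *v x) = 0" by simp
    thus "x = 0" using assms unfolding pos_def_def by force
  qed
  hence "\<exists>B. B ** S = mat 1" using matrix_left_invertible_ker by blast
  thus ?thesis using invertible_left_inverse by blast
qed

lemma inv_props:
  fixes S :: "real^'n^'n"
  assumes "invertible S"
  shows "S ** matrix_inv S = mat 1 \<and> matrix_inv S ** S = mat 1"
proof -
  have "\<exists>A'. S ** A' = mat 1 \<and> A' ** S = mat 1" using assms invertible_def by blast
  from someI_ex[OF this] show ?thesis unfolding matrix_inv_def .
qed

lemma inv_diag_pos: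
  fixes S :: "real^'n^'n"
  assumes "pos_def S"
  shows "matrix_inv S $ i $ i > 0"
proof -
  let ?P = "matrix_inv S"
  have inv: "S ** ?P = mat 1" using inv_props[OF pd_invertible[OF assms]] by blast
  define e :: "real^'n" where "e = axis i 1"
  define u where "u = ?P *v e"
  have Su: "S *v u = e" unfolding u_def by (simp only: matrix_vector_mul_assoc inv matrix_vector_mul_lid)
  have "u \<noteq> 0" using Su unfolding e_def by (metis axis_eq_0_iff matrix_vector_mult_0_right zero_neq_one)
  hence "u \<bullet> (S *v u) > 0" using assms by (simp add: pos_def_def)
  moreover have "u \<bullet> (S *v u) = ?P $ i $ i"
  proof -
    have "u \<bullet> (S *v u) = u $ i" unfolding Su e_def inner_axis by simp
    also have "\<dots> = ?P $ i $ i" unfolding u_def e_def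
      by (simp add: matrix_vector_mult_def axis_def if_distrib[of "\<lambda>a. _ * a"] cong: if_cong)
    finally show ?thesis .
  qed
  ultimately show ?thesis by simp
qed

lemma margin:
  fixes Sh :: "real^'n^'n"
  assumes "psd Sh" "invertible Sh"
  shows "\<exists>c>0. \<forall>x. c * (norm x)^2 \<le> x \<bullet> (Sh *v x)"
proof -
  have sym: "symmetric_mat Sh" using assms(1) by (simp add: psd_def)
  obtain x0 where n1: "norm x0 = 1" and low: "\<forall>x. (x0 \<bullet> (Sh *v x0)) * (norm x)^2 \<le> x \<bullet> (Sh *v x)"
    and ev: "Sh *v x0 = (x0 \<bullet> (Sh *v x0)) *\<^sub>R x0"
    using rayleigh[OF sym] by blast
  define m where "m = x0 \<bullet> (Sh *v x0)"
  have "m \<ge> 0" using assms(1) by (simp add: psd_def m_def)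
  moreover have "m \<noteq> 0"
  proof
    assume "m = 0"
    hence "Sh *v x0 = Sh *v 0" using ev by (simp add: m_def)
    hence "x0 = 0" using inj_matrix_vector_mult[OF assms(2)] by (metis injD)
    thus False using n1 by simp
  qed
  ultimately show ?thesis using low m_def by (intro exI[of _ m]) auto
qed

lemma foc:
  fixes S Sh St :: "real^'n^'n"
  assumes pd: "pos_def S" and opt: "is_opt lam S Sh St" and inv: "invertible Sh"
  shows "1 + lam \<le> 2 * matrix_inv S $ i $ i * St $ i $ i"
proof (rule ccontr)
  let ?P = "matrix_inv S"
  assume "\<not> ?thesis"
  hence a: "a > 0" if "a = 1 + lam - 2 * ?P $ i $ i * St $ i $ i" for a using that by simp
  define a where "a = 1 + lam - 2 * ?P $ i $ i * St $ i $ i"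
  have apos: "a > 0" using a a_def by blast
  have Ppos: "?P $ i $ i > 0" by (rule inv_diag_pos[OF pd])
  have mem: "(Sh, St) \<in> S_set S" and best: "\<forall>(A, B) \<in> S_set S. reg_obj lam S A \<le> reg_obj lam S Sh"
    using opt by (auto simp: is_opt_def)
  have SS: "S = Sh + St" "psd Sh" "psd St" "diagonal_mat St" using mem by (auto simp: S_set_def)
  obtain c where c: "c > 0" "\<forall>x. c * (norm x)^2 \<le> x \<bullet> (Sh *v x)" using margin[OF SS(2) inv] by blast
  define t where "t = min c (a / (2 * ?P $ i $ i))"
  have tpos: "t > 0" using c apos Ppos by (simp add: t_def)
  have tc: "t \<le> c" by (simp add: t_def)
  have ta: "t * ?P $ i $ i \<le> a / 2" using Ppos by (simp add: t_def min_def field_simps)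
  define A where "A = Sh - t *\<^sub>R Emat i"
  define B where "B = St + t *\<^sub>R Emat i"
  have "(A, B) \<in> S_set S"
  proof -
    have "S = A + B" using SS(1) by (simp add: A_def B_def)
    moreover have "psd A"
    proof -
      have "symmetric_mat A" using SS(2) Emat_sym[of i]
        by (simp add: A_def psd_def symmetric_mat_def transpose_diff transpose_scalar)
      moreover have "x \<bullet> (A *v x) \<ge> 0" for x
      proof -
        have "x \<bullet> (A *v x) = x \<bullet> (Sh *v x) - t * (x $ i)^2"
          by (simp add: A_def matrix_vector_mult_diff_rdistrib scaleR_matrix_vector_assoc[symmetric]
              inner_diff_right Emat_quad)
        moreover have "(x $ i)^2 \<le> (norm x)^2"
          using component_le_norm_cart[of x i] by (metis abs_ge_zero power2_abs power_mono)
        ultimately show ?thesis using c tc tpos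
          by (smt (verit) mult_left_mono mult_right_mono zero_le_power2)
      qed
      ultimately show ?thesis by (simp add: psd_def)
    qed
    moreover have "psd B"
    proof -
      have "symmetric_mat B" using SS(3) Emat_sym[of i]
        by (simp add: B_def psd_def symmetric_mat_def transpose_add' transpose_scalar)
      moreover have "x \<bullet> (B *v x) \<ge> 0" for x
      proof -
        have "x \<bullet> (B *v x) = x \<bullet> (St *v x) + t * (x $ i)^2"
          by (simp add: B_def matrix_vector_mult_add_rdistrib scaleR_matrix_vector_assoc[symmetric]
              inner_add_right Emat_quad)
        moreover have "x \<bullet> (St *v x) \<ge> 0" using SS(3) by (simp add: psd_def)
        ultimately show ?thesis using tpos by simp
      qed
      ultimately show ?thesis by (simp add: psd_def)
    qed
    moreover have "diagonal_mat B" using SS(4)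
      by (simp add: B_def diagonal_mat_def Emat_def)
    ultimately show ?thesis by (simp add: S_set_def)
  qed
  hence le: "reg_obj lam S A \<le> reg_obj lam S Sh" using best by blast
  have invS: "S ** ?P = mat 1" "?P ** S = mat 1" using inv_props[OF pd_invertible[OF pd]] by auto
  have Sh_eq: "Sh = S - St" using SS(1) by simp
  have d1: "(?P ** Sh) $ i $ i = 1 - ?P $ i $ i * St $ i $ i"
    by (simp add: Sh_eq msub_l invS diag_mult_r[OF SS(4)] mat_def)
  have d2: "(Sh ** ?P) $ i $ i = 1 - St $ i $ i * ?P $ i $ i"
    by (simp add: Sh_eq msub_r invS diag_mult_l[OF SS(4)] mat_def)
  have t1: "trace (Emat i ** ?P ** Sh) = 1 - ?P $ i $ i * St $ i $ i"
    by (simp add: matrix_mul_assoc[symmetric] trace_Emat_l d1)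
  have t2: "trace (Sh ** ?P ** Emat i) = 1 - St $ i $ i * ?P $ i $ i"
    by (simp add: trace_Emat_r d2)
  have t3: "trace (Emat i ** ?P ** Emat i) = ?P $ i $ i"
    by (simp add: trace_Emat_r Emat_mult_l)
  have "reg_obj lam S A = reg_obj lam S Sh - t * (1 - lam) * 1
      + t * (1 - ?P $ i $ i * St $ i $ i) + t * (1 - St $ i $ i * ?P $ i $ i) - t^2 * ?P $ i $ i"
    by (simp only: reg_obj_def A_def reg_expand t1 t2 t3 trace_Emat)
  hence "t * a - t^2 * ?P $ i $ i \<le> 0" using le by (simp add: a_def algebra_simps)
  moreover have "t^2 * ?P $ i $ i \<le> t * a / 2" using ta tpos
    by (simp add: power2_eq_square)
  moreover have "t * a > 0" using tpos apos by simp
  ultimately show False by linarith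
qed

lemma diag_mat_diagonal: "diagonal_mat (diag_mat d)"
  by (simp add: diagonal_mat_def diag_mat_def)

lemma diag_mat_sym: "symmetric_mat (diag_mat d)"
  by (simp add: symmetric_mat_def diag_mat_def transpose_def vec_eq_iff)

lemma diag_mat_vec: "diag_mat d *v x = (\<chi> i. d $ i * x $ i)"
  using diag_vec[OF diag_mat_diagonal[of d]] by (simp add: diag_mat_def)

lemma norm_sq_sum: "(norm (x::real^'n))^2 = (\<Sum>i\<in>UNIV. (x $ i)^2)"
  unfolding power2_norm_eq_inner inner_vec_def by (simp add: power2_eq_square)

theorem mainTheorem18:
  fixes S Sh St :: "real^'n^'n" and lam :: real
  assumes "pos_def S"
    and "lam \<ge> 0"
    and "lam \<ge> lambda_min S - 1"
    and "is_opt lam S Sh St"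
  shows "\<not> invertible Sh"
proof
  assume inv: "invertible Sh"
  let ?P = "matrix_inv S"
  have mem: "(Sh, St) \<in> S_set S" using assms(4) by (simp add: is_opt_def)
  have SS: "S = Sh + St" "psd Sh" "psd St" "diagonal_mat St" using mem by (auto simp: S_set_def)
  have symS: "symmetric_mat S" using assms(1) by (simp add: pos_def_def)
  have foc': "1 + lam \<le> 2 * ?P $ i $ i * St $ i $ i" for i by (rule foc[OF assms(1) assms(4) inv])
  obtain c where c: "c > 0" "\<forall>x. c * (norm x)^2 \<le> x \<bullet> (Sh *v x)" using margin[OF SS(2) inv] by blast
  define dv where "dv = (\<chi> i. sqrt (2 * ?P $ i $ i))"
  define Dh where "Dh = D0_inv_sqrt S"
  have Dh: "Dh = diag_mat dv" by (simp add: Dh_def D0_inv_sqrt_def dv_def)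
  define M where "M = Dh ** S ** Dh"
  have symM: "symmetric_mat M"
    using symS diag_mat_sym[of dv]
    by (simp add: M_def Dh symmetric_mat_def matrix_transpose_mul matrix_mul_assoc)
  obtain v where v: "v \<noteq> 0" "M *v v = Min (eigenvalues M) *\<^sub>R v" using eig_min[OF symM] by blast
  define \<mu> where "\<mu> = Min (eigenvalues M)"
  have mu: "\<mu> \<le> 1 + lam" using assms(3) by (simp add: \<mu>_def lambda_min_def M_def Dh_def)
  define w where "w = Dh *v v"
  have wi: "w $ i = dv $ i * v $ i" for i by (simp add: w_def Dh diag_mat_vec)
  have dpos: "dv $ i > 0" for i using inv_diag_pos[OF assms(1), of i] by (simp add: dv_def)
  have dsq: "(dv $ i)^2 = 2 * ?P $ i $ i" for i using inv_diag_pos[OF assms(1), of i] by (simp add: dv_def)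
  have "v \<bullet> (M *v v) = \<mu> * (norm v)^2" using v(2) by (simp add: \<mu>_def dot_square_norm)
  moreover have "v \<bullet> (M *v v) = w \<bullet> (S *v w)"
  proof -
    have "M *v v = Dh *v (S *v w)" by (simp add: M_def w_def matrix_vector_mul_assoc matrix_mul_assoc)
    hence "v \<bullet> (M *v v) = (Dh *v v) \<bullet> (S *v w)"
      using symm_inner[OF diag_mat_sym[of dv]] by (simp add: Dh)
    thus ?thesis by (simp add: w_def)
  qed
  ultimately have wSw: "w \<bullet> (S *v w) = \<mu> * (norm v)^2" by simp
  have "w \<bullet> (St *v w) = (\<Sum>i\<in>UNIV. St $ i $ i * (w $ i)^2)" by (rule diag_quad[OF SS(4)])
  also have "\<dots> = (\<Sum>i\<in>UNIV. (2 * ?P $ i $ i * St $ i $ i) * (v $ i)^2)"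
    by (rule sum.cong) (simp_all add: wi power_mult_distrib dsq)
  also have "\<dots> \<ge> (\<Sum>i\<in>UNIV. (1 + lam) * (v $ i)^2)"
    by (rule sum_mono) (simp add: foc' mult_right_mono)
  finally have wStw: "w \<bullet> (St *v w) \<ge> (1 + lam) * (norm v)^2"
    by (simp add: norm_sq_sum sum_distrib_left)
  have "w \<bullet> (Sh *v w) = w \<bullet> (S *v w) - w \<bullet> (St *v w)"
    using SS(1) by (simp add: matrix_vector_mult_add_rdistrib inner_add_right)
  also have "\<dots> \<le> (\<mu> - (1 + lam)) * (norm v)^2" using wSw wStw by (simp add: algebra_simps)
  also have "\<dots> \<le> 0" using mu by (simp add: mult_nonpos_nonneg)
  finally have "c * (norm w)^2 \<le> 0" using c(2) by (meson order_trans)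
  hence "w = 0" using c(1) by (simp add: mult_le_0_iff)
  moreover obtain j where "v $ j \<noteq> 0" using v(1) by (metis vec_eq_iff zero_index)
  ultimately show False using wi[of j] dpos[of j] by simp
qed

end
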